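(* For any positive integers $q$ and $k$ with $k\ge2$ and any $A\subseteq\mathbb{N}$, the Cayley graph $G(\mathbb{Z}^2,\pm AD_{q,k})$ is isomorphic to a subgraph of the graph with vertex set $\mathbb{R}^2$ in which two points are adjacent if their Euclidean distance lies in $A$.
   Context: For a set $C'\subseteq\mathbb{Z}^2\setminus\{0\}$ with $C'=-C'$, $G(\mathbb{Z}^2,C')$ is the Cayley graph with vertex set $\mathbb{Z}^2$ in which $u,v$ are adjacent iff $v-u\in C'$. For positive integers $q,k$ with $k\ge2$, let $X_{q,k}=\prod_{j=1}^{k-1}(q^{k+j}+q^{k-j}+1)$ and let $D_{q,k}\subseteq\mathbb{Z}^2$ consist of the points $\frac{X_{q,k}}{q^{k+j}+q^{k-j}+1}\left(q^{k+j}-q^{k-j},\,-q^j-2q^k\right)$ for $j=1,\ldots,k-1$. $\pm AD_{q,k}$ is the set of all $\pm ad$ with $a\in A$, $d\in D_{q,k}$. *)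

theory Defs
  imports Complex_Main
begin

definition Xqk :: "int \<Rightarrow> nat \<Rightarrow> int" where
  "Xqk q k = (\<Prod>j\<in>{1..k-1}. q ^ (k + j) + q ^ (k - j) + 1)"

text \<open>The set D_{q,k} of lattice points (the division is exact).\<close>
definition Dqk :: "int \<Rightarrow> nat \<Rightarrow> (int \<times> int) set" where
  "Dqk q k = {(Xqk q k div (q ^ (k + j) + q ^ (k - j) + 1) * (q ^ (k + j) - q ^ (k - j)),
               Xqk q k div (q ^ (k + j) + q ^ (k - j) + 1) * (- (q ^ j) - 2 * q ^ k)) | j.
               1 \<le> j \<and> j \<le> k - 1}"

definition pmAD :: "nat set \<Rightarrow> (int \<times> int) set \<Rightarrow> (int \<times> int) set" where
  "pmAD A D = {(s * int a * x, s * int a * y) | s a x y.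
                 s \<in> {1, -1} \<and> a \<in> A \<and> (x, y) \<in> D}"

definition cayley_adj :: "(int \<times> int) set \<Rightarrow> int \<times> int \<Rightarrow> int \<times> int \<Rightarrow> bool" where
  "cayley_adj C u v \<longleftrightarrow> (fst v - fst u, snd v - snd u) \<in> C"

definition eucl_dist2 :: "real \<times> real \<Rightarrow> real \<times> real \<Rightarrow> real" where
  "eucl_dist2 x y = sqrt ((fst x - fst y)^2 + (snd x - snd y)^2)"

definition dist_adj :: "nat set \<Rightarrow> real \<times> real \<Rightarrow> real \<times> real \<Rightarrow> bool" where
  "dist_adj A x y \<longleftrightarrow> eucl_dist2 x y \<in> real ` A"

end

theory Submission
  imports Defs
begin

lemma poly_id:
  fixes b t :: int
  shows "(b*t) * (b*t*t - b)^2 + (b*t*t - b) * (- t - 2*(b*t)) + (b*t) * (- t - 2*(b*t))^2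
         = (b*t) * (b*t*t + b + 1)^2"
  by (simp add: power2_eq_square algebra_simps)

lemma key:
  fixes q :: int and k j :: nat
  assumes "q > 0" "1 \<le> j" "j \<le> k - 1" "k \<ge> 2"
  defines "N \<equiv> q ^ (k + j) + q ^ (k - j) + 1"
  defines "c \<equiv> Xqk q k div N"
  shows "q^k * (c * (q ^ (k + j) - q ^ (k - j)))^2
         + (c * (q ^ (k + j) - q ^ (k - j))) * (c * (- (q ^ j) - 2 * q ^ k))
         + q^k * (c * (- (q ^ j) - 2 * q ^ k))^2 = q^k * (Xqk q k)^2"
proof -
  have "N dvd Xqk q k" unfolding Xqk_def N_def
    by (rule dvd_prodI) (use assms in auto)
  then have X: "Xqk q k = c * N" unfolding c_def by simp
  define b where "b = q^(k-j)"
  define t where "t = q^j"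
  have m: "q^k = b*t" unfolding b_def t_def using assms
    by (metis le_add_diff_inverse2 power_add diff_le_self le_trans one_le_numeral le_diff_conv order_trans
        nat_le_linear)
  have a: "q^(k+j) = b*t*t" using m unfolding t_def by (simp add: power_add)
  have "q^k * (q ^ (k + j) - q ^ (k - j))^2
         + (q ^ (k + j) - q ^ (k - j)) * (- (q ^ j) - 2 * q ^ k)
         + q^k * (- (q ^ j) - 2 * q ^ k)^2 = q^k * N^2"
    unfolding N_def a m using poly_id[of b t] by (simp add: b_def[symmetric] t_def[symmetric])
  then have "c^2 * (q^k * (q ^ (k + j) - q ^ (k - j))^2
         + (q ^ (k + j) - q ^ (k - j)) * (- (q ^ j) - 2 * q ^ k)
         + q^k * (- (q ^ j) - 2 * q ^ k)^2) = c^2 * (q^k * N^2)" by simp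
  then show ?thesis unfolding X by (simp add: power2_eq_square algebra_simps)
qed

lemma Xpos:
  fixes q :: int assumes "q > 0" shows "Xqk q k > 0"
  unfolding Xqk_def using assms by (intro prod_pos) (auto intro!: add_pos_pos)

lemma keyD:
  fixes q :: int
  assumes "q > 0" "k \<ge> 2" "(x, y) \<in> Dqk q k"
  shows "q^k * x^2 + x*y + q^k * y^2 = q^k * (Xqk q k)^2"
  using assms(3) unfolding Dqk_def using key[OF assms(1) _ _ assms(2)] by auto

theorem lemma4:
  fixes q :: int and k :: nat and A :: "nat set"
  assumes "q > 0" and "k \<ge> 2"
  shows "\<exists>f :: int \<times> int \<Rightarrow> real \<times> real. inj f \<and>
           (\<forall>u v. cayley_adj (pmAD A (Dqk q k) - {(0, 0)}) u v \<longrightarrow> dist_adj A (f u) (f v))"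
proof -
  define m :: real where "m = of_int (q^k)"
  define X :: real where "X = of_int (Xqk q k)"
  define s :: real where "s = sqrt (1 - 1/(4*m^2))"
  have m1: "m \<ge> 1" unfolding m_def using assms(1) by simp
  have Xp: "X > 0" unfolding X_def using Xpos[OF assms(1)] by simp
  have "1/(4*m^2) \<le> 1/4" using m1 by (simp add: field_simps)
  then have sp: "s > 0" unfolding s_def by simp
  have s2: "s^2 = 1 - 1/(4*m^2)" unfolding s_def using \<open>1/(4*m^2) \<le> 1/4\<close> by simp
  define f where "f = (\<lambda>(x::int, y::int). ((real_of_int x + real_of_int y/(2*m))/X, real_of_int y * s / X))"
  have "inj f"
  proof (rule injI)
    fix u v assume "f u = f v"
    then show "u = v" using sp Xp m1 unfolding f_def
      by (cases u; cases v) (auto simp: field_simps)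
  qed
  moreover have "dist_adj A (f u) (f v)" if "cayley_adj (pmAD A (Dqk q k) - {(0, 0)}) u v" for u v
  proof -
    from that obtain sg a x y where e: "fst v - fst u = sg * int a * x" "snd v - snd u = sg * int a * y"
      and sg: "sg \<in> {1, -1}" and aA: "a \<in> A" and d: "(x, y) \<in> Dqk q k"
      unfolding cayley_adj_def pmAD_def by auto
    have K: "m * (real_of_int x)^2 + real_of_int x * real_of_int y + m * (real_of_int y)^2 = m * X^2"
      using keyD[OF assms d] unfolding m_def X_def
      by (metis (mono_tags, opaque_lifting) of_int_add of_int_mult of_int_power)
    define dx where "dx = real_of_int (fst u) - real_of_int (fst v)"
    define dy where "dy = real_of_int (snd u) - real_of_int (snd v)"
    have dx: "dx = - (real_of_int sg * real a * real_of_int x)" unfolding dx_def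
      using arg_cong[OF e(1), of real_of_int] by simp
    have dy: "dy = - (real_of_int sg * real a * real_of_int y)" unfolding dy_def
      using arg_cong[OF e(2), of real_of_int] by simp
    have sg2: "(real_of_int sg)^2 = 1" using sg by auto
    have "(fst (f u) - fst (f v))^2 + (snd (f u) - snd (f v))^2
        = ((dx + dy/(2*m))^2 + dy^2 * s^2) / X^2"
      unfolding f_def dx_def dy_def using Xp m1
      by (cases u; cases v) (simp add: field_simps power2_eq_square)
    also have "\<dots> = (m*dx^2 + dx*dy + m*dy^2) / (m * X^2)"
      unfolding s2 using Xp m1 by (simp add: field_simps power2_eq_square)
    also have "m*dx^2 + dx*dy + m*dy^2 = (real_of_int sg)^2 * (real a)^2 *
        (m * (real_of_int x)^2 + real_of_int x * real_of_int y + m * (real_of_int y)^2)"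
      unfolding dx dy by (simp add: power2_eq_square algebra_simps)
    also have "\<dots> = (real a)^2 * (m * X^2)" unfolding K sg2 by simp
    finally have "(fst (f u) - fst (f v))^2 + (snd (f u) - snd (f v))^2 = (real a)^2"
      using Xp m1 by simp
    then have "eucl_dist2 (f u) (f v) = real a" unfolding eucl_dist2_def by simp
    then show ?thesis unfolding dist_adj_def using aA by simp
  qed
  ultimately show ?thesis by blast
qed

end
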